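(* Let $d\ge 1$ and $z\ge 2$ be integers. For $c=(c_{d+1},c_{d+2},\dots,c_{dz})\in\mathbb{Z}_2^{d(z-1)}$ with $s=\|c\|$, let $i_1<\dots<i_s$ be the indices with $c_{i}=1$, and set $w_0=0$, $w_t=\lfloor (i_t-1)/d\rfloor$ for $1\le t\le s$, and $w_{s+1}=z$. Let $V(z)=\{c\in\mathbb{Z}_2^{d(z-1)}: \max_{0\le t\le s}(w_{t+1}-w_t)\le\lceil (\log_2 z)^2\rceil\}$. Then $$|V(z)|\ge 2^{d(z-1)}\big(1-2z^{\,1-d\log_2 z}\big).$$
   Context: $\|c\|$ denotes the Hamming weight (number of coordinates equal to $1$). Note $1\le w_t\le z-1$ for $1\le t\le s$. *)

theory Defs
  imports Complex_Main
begin

text \<open>A vector c = (c_{d+1},...,c_{dz}) in Z_2^{d(z-1)} is represented as a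
  function nat \<Rightarrow> bool that is False outside the index range {d+1..d*z}.\<close>

definition binvecs :: "nat \<Rightarrow> nat \<Rightarrow> (nat \<Rightarrow> bool) set" where
  "binvecs d z = {c. \<forall>i. i \<notin> {d+1..d*z} \<longrightarrow> \<not> c i}"

definition wseq :: "nat \<Rightarrow> nat \<Rightarrow> (nat \<Rightarrow> bool) \<Rightarrow> nat list" where
  "wseq d z c = 0 # map (\<lambda>i. (i - 1) div d) (sorted_list_of_set {i \<in> {d+1..d*z}. c i}) @ [z]"

definition Vset :: "nat \<Rightarrow> nat \<Rightarrow> (nat \<Rightarrow> bool) set" where
  "Vset d z = {c \<in> binvecs d z.
     (let w = wseq d z c; s = card {i \<in> {d+1..d*z}. c i} in
       real_of_int (Max {int (w ! (t+1)) - int (w ! t) | t. t \<in> {0..s}})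
         \<le> real_of_int (ceiling ((log 2 (real z))^2)))}"

end

theory Submission
  imports Defs
begin

lemma card_supp_funs:
  assumes "finite S"
  shows "card {c::nat\<Rightarrow>bool. \<forall>i. i \<notin> S \<longrightarrow> \<not> c i} = 2 ^ card S"
proof -
  have "bij_betw (\<lambda>c. {i. c i}) {c::nat\<Rightarrow>bool. \<forall>i. i \<notin> S \<longrightarrow> \<not> c i} (Pow S)"
    unfolding bij_betw_def
  proof
    show "inj_on (\<lambda>c. {i. c i}) {c::nat\<Rightarrow>bool. \<forall>i. i \<notin> S \<longrightarrow> \<not> c i}"
      by (auto simp: inj_on_def fun_eq_iff)
    show "(\<lambda>c. {i. c i}) ` {c::nat\<Rightarrow>bool. \<forall>i. i \<notin> S \<longrightarrow> \<not> c i} = Pow S"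
    proof (rule set_eqI, rule iffI)
      fix A assume "A \<in> Pow S"
      then show "A \<in> (\<lambda>c. {i. c i}) ` {c::nat\<Rightarrow>bool. \<forall>i. i \<notin> S \<longrightarrow> \<not> c i}"
        by (intro image_eqI[where x="\<lambda>i. i \<in> A"]) auto
    qed auto
  qed
  then show ?thesis using bij_betw_same_card card_Pow assms by metis
qed

lemma bad_window:
  fixes d z L :: nat
  assumes d: "d \<ge> 1" and z: "z \<ge> 2"
    and cB: "c \<in> binvecs d z"
    and nV: "c \<notin> Vset d z"
    and L: "L = nat (ceiling ((log 2 (real z))^2))"
  shows "\<exists>a. 1 \<le> a \<and> a + L \<le> z \<and> (\<forall>i. a*d < i \<and> i \<le> (a+L)*d \<longrightarrow> \<not> c i)"
proof -
  define I where "I = {i \<in> {d+1..d*z}. c i}"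
  define xs where "xs = sorted_list_of_set I"
  define f where "f = (\<lambda>i::nat. (i - 1) div d)"
  define w where "w = wseq d z c"
  define s where "s = card I"
  have finI: "finite I" unfolding I_def by auto
  have lenxs: "length xs = s" unfolding xs_def s_def by simp
  have wdef: "w = 0 # map f xs @ [z]" unfolding w_def wseq_def xs_def I_def f_def by simp
  have lenw: "length w = s + 2" using wdef lenxs by simp
  have setxs: "set xs = I" unfolding xs_def using finI by simp
  have sxs: "sorted xs" unfolding xs_def by simp
  have monof: "mono f" unfolding f_def mono_def by (auto intro: div_le_mono)
  have fI: "\<forall>i\<in>I. f i \<le> z" unfolding I_def f_def
  proof
    fix i assume "i \<in> {i \<in> {d+1..d*z}. c i}"
    then have "i - 1 \<le> d * z" by auto
    then have "(i-1) div d \<le> (d*z) div d" by (rule div_le_mono)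
    then show "(i - 1) div d \<le> z" using d by simp
  qed
  have sw: "sorted w" unfolding wdef
    using sxs monof fI setxs
    by (auto simp: sorted_append sorted_map intro!: sorted_wrt_mono_rel[of _ "(\<le>)"] dest: monoD
        intro: sorted_wrt_map_mono)
  have Lc: "ceiling ((log 2 (real z))^2) = int L"
  proof -
    have "0 \<le> (log 2 (real z))^2" by simp
    then have "0 \<le> ceiling ((log 2 (real z))^2)" by linarith
    then show ?thesis using L by simp
  qed
  let ?M = "{int (w ! (t+1)) - int (w ! t) | t. t \<in> {0..s}}"
  have finM: "finite ?M" by simp
  have neM: "?M \<noteq> {}" by auto
  have "\<not> Max ?M \<le> int L"
    using nV cB unfolding Vset_def by (simp add: Let_def w_def s_def I_def Lc)
  then obtain t where t: "t \<le> s" and gap: "int (w ! (t+1)) - int (w ! t) > int L"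
    using Max_in[OF finM neM] by auto
  define g where "g = w ! t"
  define h where "h = w ! (t+1)"
  have gh: "g + L + 1 \<le> h" using gap unfolding g_def h_def by simp
  have hz: "h \<le> z"
  proof -
    have "h \<le> w ! (s+1)" unfolding h_def using sw t lenw by (intro sorted_nth_mono) auto
    also have "w ! (s+1) = z" using wdef lenxs by (simp add: nth_append)
    finally show ?thesis .
  qed
  show ?thesis
  proof (intro exI conjI allI impI)
    show "1 \<le> g + 1" by simp
    show "g + 1 + L \<le> z" using gh hz by simp
    fix i assume i: "(g+1)*d < i \<and> i \<le> (g+1+L)*d"
    show "\<not> c i"
    proof
      assume ci: "c i"
      have "d \<le> (g+1)*d" by simp
      then have "d + 1 \<le> i" using i by linarith
      moreover have "i \<le> d * z" using i \<open>g + 1 + L \<le> z\<close>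
        by (metis le_trans mult.commute mult_le_mono1)
      ultimately have iI: "i \<in> I" unfolding I_def using ci by auto
      have fi1: "g < f i"
      proof -
        have "(g+1)*d \<le> i - 1" using i by linarith
        then have "((g+1)*d) div d \<le> (i-1) div d" by (rule div_le_mono)
        then show ?thesis using d unfolding f_def by simp
      qed
      have fi2: "f i < h"
      proof -
        have "i - 1 < (g+1+L)*d" using i d by linarith
        then have "(i-1) div d < g+1+L" using d by (simp add: less_mult_imp_div_less)
        then show ?thesis using gh unfolding f_def by simp
      qed
      obtain k where k: "k < s" "xs ! k = i" using iI setxs lenxs by (metis in_set_conv_nth)
      have wk: "w ! (k+1) = f i" using wdef k lenxs by (simp add: nth_append)
      show False
      proof (cases "k + 1 \<le> t")
        case True
        then have "w ! (k+1) \<le> w ! t" using sw t lenw by (intro sorted_nth_mono) auto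
        then show False using wk fi1 g_def by simp
      next
        case False
        then have "w ! (t+1) \<le> w ! (k+1)" using sw k lenw by (intro sorted_nth_mono) auto
        then show False using wk fi2 h_def by simp
      qed
    qed
  qed
qed


theorem mainTheorem11:
  fixes d z :: nat
  assumes "d \<ge> 1" and "z \<ge> 2"
  shows "real (card (Vset d z)) \<ge>
    2 ^ (d * (z - 1)) * (1 - 2 * real z powr (1 - real d * log 2 (real z)))"
proof -
  note d = assms(1) and z = assms(2)
  define L where "L = nat (ceiling ((log 2 (real z))^2))"
  define n where "n = d * (z - 1)"
  define S where "S = {d+1..d*z}"
  define A where "A = {a::nat. 1 \<le> a \<and> a + L \<le> z}"
  define T where "T = (\<lambda>a::nat. {a*d+1..(a+L)*d})"
  define W where "W = (\<lambda>a. {c::nat\<Rightarrow>bool. \<forall>i. i \<notin> S - T a \<longrightarrow> \<not> c i})"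
  have cS: "card S = n" unfolding S_def n_def by (simp add: right_diff_distrib')
  have Bdef: "binvecs d z = {c. \<forall>i. i \<notin> S \<longrightarrow> \<not> c i}" unfolding binvecs_def S_def by simp
  have cB: "card (binvecs d z) = 2 ^ n" using card_supp_funs[of S] cS Bdef S_def by simp
  have finB: "finite (binvecs d z)"
    by (rule card_ge_0_finite) (simp add: cB)
  have VB: "Vset d z \<subseteq> binvecs d z" unfolding Vset_def by (rule Collect_subset)
  have sub: "binvecs d z - Vset d z \<subseteq> (\<Union>a\<in>A. W a)"
  proof
    fix c assume c: "c \<in> binvecs d z - Vset d z"
    then obtain a where a: "1 \<le> a" "a + L \<le> z" and win: "\<forall>i. a*d < i \<and> i \<le> (a+L)*d \<longrightarrow> \<not> c i"
      using bad_window[OF d z, of c L] L_def by auto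
    have "c \<in> W a" unfolding W_def
    proof (intro CollectI allI impI)
      fix i assume "i \<notin> S - T a"
      then consider "i \<notin> S" | "i \<in> T a" by blast
      then show "\<not> c i"
      proof cases
        case 1 then show ?thesis using c Bdef by auto
      next
        case 2 then show ?thesis using win unfolding T_def by auto
      qed
    qed
    then show "c \<in> (\<Union>a\<in>A. W a)" using a unfolding A_def by auto
  qed
  have finA: "finite A" unfolding A_def by (rule finite_subset[of _ "{..z}"]) auto
  have cA: "card A \<le> z"
  proof -
    have "A \<subseteq> {1..z}" unfolding A_def by auto
    then show ?thesis using card_mono[of "{1..z}" A] by simp
  qed
  have cW: "card (W a) = 2 ^ (n - L*d)" if "a \<in> A" for a
  proof -
    have TS: "T a \<subseteq> S" using that unfolding A_def T_def S_def
    proof -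
      assume "a \<in> {a. 1 \<le> a \<and> a + L \<le> z}"
      then have "1 \<le> a" "a + L \<le> z" by auto
      then have "d \<le> a*d" "(a+L)*d \<le> z*d" by simp_all
      then show "{a*d+1..(a+L)*d} \<subseteq> {d+1..d*z}" by (auto simp: mult.commute)
    qed
    have cT: "card (T a) = L*d" unfolding T_def by (simp add: add_mult_distrib)
    have "card (S - T a) = n - L*d"
      using card_Diff_subset[of "T a" S] TS cS cT S_def by (simp add: finite_subset)
    then show ?thesis unfolding W_def using card_supp_funs[of "S - T a"] S_def by simp
  qed
  have "card (binvecs d z - Vset d z) \<le> card (\<Union>a\<in>A. W a)"
  proof (rule card_mono[OF _ sub])
    have "W a \<subseteq> binvecs d z" for a using Bdef by (auto simp: W_def)
    then have "(\<Union>a\<in>A. W a) \<subseteq> binvecs d z" by blast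
    then show "finite (\<Union>a\<in>A. W a)" using finB by (rule finite_subset)
  qed
  also have "\<dots> \<le> (\<Sum>a\<in>A. card (W a))" by (rule card_UN_le[OF finA])
  also have "\<dots> = card A * 2 ^ (n - L*d)" using cW by simp
  finally have bad: "card (binvecs d z - Vset d z) \<le> card A * 2 ^ (n - L*d)" .
  have split: "card (binvecs d z) = card (Vset d z) + card (binvecs d z - Vset d z)"
    using card_Diff_subset[OF finite_subset[OF VB finB] VB] card_mono[OF finB VB] by simp
  define P where "P = real z powr (1 - real d * log 2 (real z))"
  have Ppos: "P > 0" unfolding P_def using z by simp
  show ?thesis
  proof (cases "A = {}")
    case True
    then have "card (Vset d z) = 2 ^ n" using split bad cB by simp
    then show ?thesis using Ppos unfolding P_def n_def by simp
  next
    case False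
    then obtain a where "a \<in> A" by auto
    then have "L \<le> z - 1" unfolding A_def by auto
    then have Lz: "L*d \<le> n" unfolding n_def by (simp add: mult.commute)
    have "real (card (Vset d z)) \<ge> 2^n - real z * 2 ^ (n - L*d)"
    proof -
      have "real (card (binvecs d z - Vset d z)) \<le> real (card A) * 2 ^ (n - L*d)"
      proof -
        have "real (card (binvecs d z - Vset d z)) \<le> real (card A * 2 ^ (n - L*d))"
          using bad by (simp only: of_nat_le_iff)
        then show ?thesis by simp
      qed
      also have "\<dots> \<le> real z * 2 ^ (n - L*d)" using cA by simp
      finally have X: "real (card (binvecs d z - Vset d z)) \<le> real z * 2 ^ (n - L*d)" .
      moreover have "real (card (binvecs d z)) = real (card (Vset d z)) + real (card (binvecs d z - Vset d z))"
        using split by simp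
      moreover have "real (card (binvecs d z)) = 2^n" using cB by simp
      ultimately show ?thesis by linarith
    qed
    moreover have key: "real z * 2 ^ (n - L*d) \<le> 2^n * (2 * P)"
    proof -
      have e: "(2::real) ^ n = 2 ^ (n - L*d) * 2 ^ (L*d)" using Lz by (simp add: power_add[symmetric])
      have lz: "log 2 (real z) \<ge> 0" using z by simp
      have Lge: "real L \<ge> (log 2 (real z))^2" unfolding L_def
        using real_nat_ceiling_ge by blast
      have zp: "real z powr (real d * log 2 (real z)) = 2 powr (real d * (log 2 (real z))^2)"
      proof -
        have "real z = 2 powr log 2 (real z)" using z by simp
        then have "real z powr (real d * log 2 (real z)) = (2 powr log 2 (real z)) powr (real d * log 2 (real z))" by simp
        also have "\<dots> = 2 powr (real d * (log 2 (real z))^2)" by (simp add: powr_powr power2_eq_square mult_ac)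
        finally show ?thesis .
      qed
      have "(2::real) powr (real d * (log 2 (real z))^2) \<le> 2 powr (real (L*d))"
        using Lge by (intro powr_mono) (auto simp: mult.commute[of "real L"] intro: mult_left_mono)
      also have "\<dots> = 2 ^ (L*d)" by (rule powr_realpow) simp
      finally have le: "real z powr (real d * log 2 (real z)) \<le> 2 ^ (L*d)" using zp by simp
      have Peq: "P = real z / real z powr (real d * log 2 (real z))"
        unfolding P_def using z by (simp add: powr_diff)
      have zpos: "real z powr (real d * log 2 (real z)) > 0" using z by simp
      have "real z \<le> 2 ^ (L*d) * P"
      proof -
        have "real z = real z powr (real d * log 2 (real z)) * P" using Peq zpos by simp
        also have "\<dots> \<le> 2 ^ (L*d) * P" using le Ppos by (intro mult_right_mono) auto
        finally show ?thesis .
      qed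
      then have "real z * 2 ^ (n - L*d) \<le> 2 ^ (L*d) * P * 2 ^ (n - L*d)" by (intro mult_right_mono) auto
      also have "\<dots> = 2^n * P" using e by simp
      also have "\<dots> \<le> 2^n * (2*P)" using Ppos by simp
      finally show ?thesis .
    qed
    ultimately show ?thesis unfolding P_def n_def by (simp add: algebra_simps)
  qed
qed

end
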